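(* Let $\tilde{\mathfrak g}$ be a real solvable Lie algebra with a metric $\langle,\rangle$ and a standard decomposition $\tilde{\mathfrak g}=\mathfrak g\oplus^\perp\mathfrak a$. Let $e_1,\dots,e_k$ be an orthonormal basis of $\mathfrak a$, $\langle e_s,e_r\rangle=\epsilon_s\delta_{sr}$ with $\epsilon_s=\pm1$, and let $\phi_s\in\operatorname{Der}\mathfrak g$ be defined by $[v,e_s]=\phi_s(v)$ for $v\in\mathfrak g$, with $\phi_s^*$ its adjoint with respect to the restriction of $\langle,\rangle$ to $\mathfrak g$. Let $\widetilde{\operatorname{ric}}$ be the Ricci tensor of $\tilde{\mathfrak g}$ and $\operatorname{ric}$ the Ricci tensor of $\mathfrak g$ with the restricted metric. Then for all $v,w\in\mathfrak g$ and all $s,r$: $\widetilde{\operatorname{ric}}(v,w)=\operatorname{ric}(v,w)+\sum_s\Bigl(\frac12\epsilon_s\langle[\phi_s,\phi_s^*](v),w\rangle-\frac12\epsilon_s\langle(\phi_s+\phi_s^* )(v),w\rangle\operatorname{Tr}\phi_s\Bigr)$, $\widetilde{\operatorname{ric}}(v,e_s)=\frac12\langle\operatorname{ad}v,\phi_s\rangle$, $\widetilde{\operatorname{ric}}(e_s,e_r)=-\frac12\langle\phi_s,\phi_r\rangle-\frac12\operatorname{Tr}(\phi_s\circ\phi_r)$, where $\operatorname{ad}v$ denotes the adjoint action of $v$ on $\mathfrak g$, and for endomorphisms $f,g$ of $\mathfrak g$, $\langle f,g\rangle=\sum_i\eta_i\langle f(u_i),g(u_i)\rangle$ for any orthonormal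 basis $u_i$ of $\mathfrak g$ with $\langle u_i,u_i\rangle=\eta_i=\pm1$.
   Context: A metric on a Lie algebra is a nondegenerate symmetric bilinear form, possibly indefinite; the Ricci tensor is that of the corresponding left-invariant pseudo-Riemannian metric on the simply connected Lie group, evaluated at the identity. A standard decomposition of a metric Lie algebra $\tilde{\mathfrak g}$ is a decomposition $\tilde{\mathfrak g}=\mathfrak g\oplus^\perp\mathfrak a$ as an orthogonal direct sum of vector spaces, where $\mathfrak g$ is a nilpotent ideal and $\mathfrak a$ is an abelian subalgebra. *)

theory Defs
  imports "HOL-Analysis.Analysis"
begin

text \<open>A (finite-dimensional real) Lie algebra: the underlying space is a Euclidean space
type 'a (used only as a finite-dimensional real vector space; its inner product plays
no role), with a bilinear alternating bracket satisfying the Jacobi identity.\<close>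

definition lie_algebra :: "('a::euclidean_space \<Rightarrow> 'a \<Rightarrow> 'a) \<Rightarrow> bool" where
  "lie_algebra br \<longleftrightarrow> bilinear br \<and> (\<forall>x. br x x = 0) \<and>
     (\<forall>x y z. br x (br y z) + br y (br z x) + br z (br x y) = 0)"

definition metric :: "('a::euclidean_space \<Rightarrow> 'a \<Rightarrow> real) \<Rightarrow> bool" where
  "metric B \<longleftrightarrow> bilinear B \<and> (\<forall>x y. B x y = B y x) \<and>
     (\<forall>x. (\<forall>y. B x y = 0) \<longrightarrow> x = 0)"

definition bracket_span :: "('a::euclidean_space \<Rightarrow> 'a \<Rightarrow> 'a) \<Rightarrow> 'a set \<Rightarrow> 'a set \<Rightarrow> 'a set" where
  "bracket_span br S T = span {br x y | x y. x \<in> S \<and> y \<in> T}"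

fun derived_series :: "('a::euclidean_space \<Rightarrow> 'a \<Rightarrow> 'a) \<Rightarrow> nat \<Rightarrow> 'a set" where
  "derived_series br 0 = UNIV"
| "derived_series br (Suc n) = bracket_span br (derived_series br n) (derived_series br n)"

definition solvable :: "('a::euclidean_space \<Rightarrow> 'a \<Rightarrow> 'a) \<Rightarrow> bool" where
  "solvable br \<longleftrightarrow> (\<exists>n. derived_series br n = {0})"

fun lower_central :: "('a::euclidean_space \<Rightarrow> 'a \<Rightarrow> 'a) \<Rightarrow> 'a set \<Rightarrow> nat \<Rightarrow> 'a set" where
  "lower_central br g 0 = g"
| "lower_central br g (Suc n) = bracket_span br g (lower_central br g n)"

definition lie_ideal :: "('a::euclidean_space \<Rightarrow> 'a \<Rightarrow> 'a) \<Rightarrow> 'a set \<Rightarrow> bool" where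
  "lie_ideal br g \<longleftrightarrow> subspace g \<and> (\<forall>x\<in>g. \<forall>y. br x y \<in> g \<and> br y x \<in> g)"

definition nilpotent_sub :: "('a::euclidean_space \<Rightarrow> 'a \<Rightarrow> 'a) \<Rightarrow> 'a set \<Rightarrow> bool" where
  "nilpotent_sub br g \<longleftrightarrow> (\<exists>n. lower_central br g n = {0})"

definition abelian_subalgebra :: "('a::euclidean_space \<Rightarrow> 'a \<Rightarrow> 'a) \<Rightarrow> 'a set \<Rightarrow> bool" where
  "abelian_subalgebra br a \<longleftrightarrow> subspace a \<and> (\<forall>x\<in>a. \<forall>y\<in>a. br x y = 0)"

definition standard_decomposition ::
  "('a::euclidean_space \<Rightarrow> 'a \<Rightarrow> 'a) \<Rightarrow> ('a \<Rightarrow> 'a \<Rightarrow> real) \<Rightarrow> 'a set \<Rightarrow> 'a set \<Rightarrow> bool" where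
  "standard_decomposition br B g a \<longleftrightarrow>
     lie_ideal br g \<and> nilpotent_sub br g \<and> abelian_subalgebra br a \<and>
     g \<inter> a = {0} \<and> (\<forall>v. \<exists>x\<in>g. \<exists>y\<in>a. v = x + y) \<and>
     (\<forall>x\<in>g. \<forall>y\<in>a. B x y = 0)"

text \<open>Levi-Civita connection of the left-invariant metric on the subalgebra S with the
restricted metric (Koszul formula).\<close>
definition levi_civita ::
  "('a::euclidean_space \<Rightarrow> 'a \<Rightarrow> 'a) \<Rightarrow> ('a \<Rightarrow> 'a \<Rightarrow> real) \<Rightarrow> 'a set \<Rightarrow> 'a \<Rightarrow> 'a \<Rightarrow> 'a" where
  "levi_civita br B S X Y = (THE Z. Z \<in> S \<and>
     (\<forall>W\<in>S. 2 * B Z W = B (br X Y) W - B (br Y W) X + B (br W X) Y))"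

definition curvature ::
  "('a::euclidean_space \<Rightarrow> 'a \<Rightarrow> 'a) \<Rightarrow> ('a \<Rightarrow> 'a \<Rightarrow> real) \<Rightarrow> 'a set \<Rightarrow> 'a \<Rightarrow> 'a \<Rightarrow> 'a \<Rightarrow> 'a" where
  "curvature br B S X Y Z =
     levi_civita br B S X (levi_civita br B S Y Z) - levi_civita br B S Y (levi_civita br B S X Z)
     - levi_civita br B S (br X Y) Z"

definition trace_on :: "'a::euclidean_space set \<Rightarrow> ('a \<Rightarrow> 'a) \<Rightarrow> real" where
  "trace_on S f = (let Bs = (SOME Bs. independent Bs \<and> span Bs = S)
                    in \<Sum>b\<in>Bs. representation Bs (f b) b)"

definition ricci ::
  "('a::euclidean_space \<Rightarrow> 'a \<Rightarrow> 'a) \<Rightarrow> ('a \<Rightarrow> 'a \<Rightarrow> real) \<Rightarrow> 'a set \<Rightarrow> 'a \<Rightarrow> 'a \<Rightarrow> real" where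
  "ricci br B S X Y = trace_on S (\<lambda>Z. curvature br B S Z X Y)"

definition adjoint_on :: "('a::euclidean_space \<Rightarrow> 'a \<Rightarrow> real) \<Rightarrow> 'a set \<Rightarrow> ('a \<Rightarrow> 'a) \<Rightarrow> 'a \<Rightarrow> 'a" where
  "adjoint_on B S f v = (THE u. u \<in> S \<and> (\<forall>w\<in>S. B u w = B v (f w)))"

definition orthonormal_basis ::
  "('a::euclidean_space \<Rightarrow> 'a \<Rightarrow> real) \<Rightarrow> 'a set \<Rightarrow> nat \<Rightarrow> (nat \<Rightarrow> 'a) \<Rightarrow> (nat \<Rightarrow> real) \<Rightarrow> bool" where
  "orthonormal_basis B S m u eta \<longleftrightarrow>
     (\<forall>i<m. u i \<in> S \<and> (eta i = 1 \<or> eta i = -1)) \<and>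
     (\<forall>i<m. \<forall>j<m. B (u i) (u j) = (if i = j then eta i else 0)) \<and>
     span (u ` {..<m}) = S"

definition endo_inner ::
  "('a::euclidean_space \<Rightarrow> 'a \<Rightarrow> real) \<Rightarrow> nat \<Rightarrow> (nat \<Rightarrow> 'a) \<Rightarrow> (nat \<Rightarrow> real) \<Rightarrow> ('a \<Rightarrow> 'a) \<Rightarrow> ('a \<Rightarrow> 'a) \<Rightarrow> real" where
  "endo_inner B m u eta f g = (\<Sum>i<m. eta i * B (f (u i)) (g (u i)))"

end

theory Submission
  imports Defs
begin

definition onf :: "('a::euclidean_space \<Rightarrow> 'a \<Rightarrow> real) \<Rightarrow> 'i set \<Rightarrow> ('i \<Rightarrow> 'a) \<Rightarrow> ('i \<Rightarrow> real) \<Rightarrow> bool" where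
  "onf B I w \<sigma> \<longleftrightarrow> finite I \<and> (\<forall>i\<in>I. \<sigma> i * \<sigma> i = 1) \<and>
     (\<forall>i\<in>I. \<forall>j\<in>I. B (w i) (w j) = (if i = j then \<sigma> i else 0))"

locale symform =
  fixes B :: "'a::euclidean_space \<Rightarrow> 'a \<Rightarrow> real"
  assumes bil: "bilinear B" and sym: "\<And>x y. B x y = B y x"
begin

lemma lin1: "linear (\<lambda>x. B x y)" using bil by (simp add: bilinear_def)
lemma lin2: "linear (\<lambda>y. B x y)" using bil by (simp add: bilinear_def)

lemma B_add1[simp]: "B (x + y) z = B x z + B y z" using bilinear_ladd[OF bil] .
lemma B_add2[simp]: "B z (x + y) = B z x + B z y" using bilinear_radd[OF bil] .
lemma B_diff1[simp]: "B (x - y) z = B x z - B y z" using bilinear_lsub[OF bil] .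
lemma B_diff2[simp]: "B z (x - y) = B z x - B z y" using bilinear_rsub[OF bil] .
lemma B_neg1[simp]: "B (- x) z = - B x z" using bilinear_lneg[OF bil] .
lemma B_neg2[simp]: "B z (- x) = - B z x" using bilinear_rneg[OF bil] .
lemma B_scale1[simp]: "B (c *\<^sub>R x) z = c * B x z" using bilinear_lmul[OF bil] by simp
lemma B_scale2[simp]: "B z (c *\<^sub>R x) = c * B z x" using bilinear_rmul[OF bil] by simp
lemma B_zero1[simp]: "B 0 z = 0" using bilinear_lzero[OF bil] by simp
lemma B_zero2[simp]: "B z 0 = 0" using bilinear_rzero[OF bil] by simp
lemma B_sum1: "B (sum f S) z = (\<Sum>i\<in>S. B (f i) z)"
  using real_vector.linear_sum[OF lin1, of f S z] by simp
lemma B_sum2: "B z (sum f S) = (\<Sum>i\<in>S. B z (f i))"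
  using real_vector.linear_sum[OF lin2, of z f S] by simp

definition expn :: "'i set \<Rightarrow> ('i \<Rightarrow> 'a) \<Rightarrow> ('i \<Rightarrow> real) \<Rightarrow> 'a \<Rightarrow> 'a" where
  "expn I w \<sigma> x = (\<Sum>i\<in>I. (\<sigma> i * B x (w i)) *\<^sub>R w i)"

lemma expn_linear: "linear (expn I w \<sigma>)"
  by (rule linearI) (simp_all add: expn_def distrib_left scaleR_add_left sum.distrib
      scaleR_sum_right algebra_simps)

lemma expand:
  assumes on: "onf B I w \<sigma>" and x: "x \<in> span (w ` I)"
  shows "x = (\<Sum>i\<in>I. (\<sigma> i * B x (w i)) *\<^sub>R w i)"
proof -
  have "linear (\<lambda>x. expn I w \<sigma> x - x)"
    using expn_linear unfolding linear_iff by (simp add: algebra_simps)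
  hence sub: "subspace {x. expn I w \<sigma> x - x = 0}"
    by (rule real_vector.linear_subspace_kernel)
  have "expn I w \<sigma> x - x = 0"
  proof (rule real_vector.span_induct[OF x sub])
    fix y assume "y \<in> w ` I"
    then obtain j where j: "j \<in> I" "y = w j" by auto
    have "expn I w \<sigma> y = (\<Sum>i\<in>I. if i = j then w j else 0)"
      unfolding expn_def j(2)
      by (rule sum.cong) (use on j in \<open>auto simp: onf_def\<close>)
    also have "\<dots> = w j" using on j by (simp add: onf_def)
    finally show "expn I w \<sigma> y - y = 0" using j by simp
  qed
  thus ?thesis by (simp add: expn_def)
qed

lemma parseval:
  assumes on: "onf B I w \<sigma>" and x: "x \<in> span (w ` I)"
  shows "B x y = (\<Sum>i\<in>I. \<sigma> i * B x (w i) * B (w i) y)"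
proof -
  have "B x y = B (\<Sum>i\<in>I. (\<sigma> i * B x (w i)) *\<^sub>R w i) y"
    using expand[OF on x] by simp
  thus ?thesis by (simp add: B_sum1)
qed

lemma eq_by_basis:
  assumes on: "onf B I w \<sigma>" and x: "x \<in> span (w ` I)" and y: "y \<in> span (w ` I)"
    and eq: "\<And>i. i \<in> I \<Longrightarrow> B x (w i) = B y (w i)"
  shows "x = y"
  using expand[OF on x] expand[OF on y] eq by (metis (no_types, lifting) sum.cong)

lemma riesz:
  assumes on: "onf B I w \<sigma>" and f: "linear f"
  shows "(\<Sum>i\<in>I. (\<sigma> i * f (w i)) *\<^sub>R w i) \<in> span (w ` I)"
    and "\<And>W. W \<in> span (w ` I) \<Longrightarrow> B (\<Sum>i\<in>I. (\<sigma> i * f (w i)) *\<^sub>R w i) W = f W"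
proof -
  show "(\<Sum>i\<in>I. (\<sigma> i * f (w i)) *\<^sub>R w i) \<in> span (w ` I)"
    by (intro real_vector.span_sum real_vector.span_scale real_vector.span_base) auto
  fix W assume W: "W \<in> span (w ` I)"
  have "f W = f (\<Sum>i\<in>I. (\<sigma> i * B W (w i)) *\<^sub>R w i)" using expand[OF on W] by simp
  also have "\<dots> = (\<Sum>i\<in>I. (\<sigma> i * B W (w i)) * f (w i))"
    using f by (simp add: real_vector.linear_sum real_vector.linear_scale)
  also have "\<dots> = B (\<Sum>i\<in>I. (\<sigma> i * f (w i)) *\<^sub>R w i) W"
    unfolding B_sum1 by (simp add: sym[of "w _" W] mult_ac)
  finally show "B (\<Sum>i\<in>I. (\<sigma> i * f (w i)) *\<^sub>R w i) W = f W" by simp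
qed

lemma trace_basis:
  assumes on: "onf B I w \<sigma>" and f: "linear f" and fS: "\<And>x. x \<in> span (w ` I) \<Longrightarrow> f x \<in> span (w ` I)"
    and ind: "independent Bs" and sp: "span Bs = span (w ` I)"
  shows "(\<Sum>b\<in>Bs. representation Bs (f b) b) = (\<Sum>i\<in>I. \<sigma> i * B (f (w i)) (w i))"
proof -
  have fin: "finite Bs" using ind by (rule eucl.finiteI_independent)
  have fin2: "finite I" using on by (simp add: onf_def)
  have Bsin: "b \<in> span (w ` I)" if "b \<in> Bs" for b
    using real_vector.span_base[OF that] sp by simp
  have wi: "w i \<in> span Bs" if "i \<in> I" for i using sp real_vector.span_base[of "w i" "w ` I"] that by simp
  have rep_lin: "representation Bs (\<Sum>i\<in>I. (c i) *\<^sub>R w i) b = (\<Sum>i\<in>I. c i * representation Bs (w i) b)" for c b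
    using wi ind by (simp add: real_vector.representation_sum real_vector.representation_scale
        real_vector.span_scale)
  have "(\<Sum>b\<in>Bs. representation Bs (f b) b)
      = (\<Sum>b\<in>Bs. \<Sum>i\<in>I. (\<sigma> i * B (f b) (w i)) * representation Bs (w i) b)"
  proof (rule sum.cong[OF refl])
    fix b assume b: "b \<in> Bs"
    have "f b = (\<Sum>i\<in>I. (\<sigma> i * B (f b) (w i)) *\<^sub>R w i)"
      by (rule expand[OF on fS[OF Bsin[OF b]]])
    hence "representation Bs (f b) b = representation Bs (\<Sum>i\<in>I. (\<sigma> i * B (f b) (w i)) *\<^sub>R w i) b"
      by simp
    also have "\<dots> = (\<Sum>i\<in>I. (\<sigma> i * B (f b) (w i)) * representation Bs (w i) b)"
      by (rule rep_lin)
    finally show "representation Bs (f b) b = \<dots>" .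
  qed
  also have "\<dots> = (\<Sum>i\<in>I. \<Sum>b\<in>Bs. (\<sigma> i * B (f b) (w i)) * representation Bs (w i) b)"
    by (rule sum.swap)
  also have "\<dots> = (\<Sum>i\<in>I. \<sigma> i * B (f (w i)) (w i))"
  proof (rule sum.cong[OF refl])
    fix i assume i: "i \<in> I"
    have eq: "w i = (\<Sum>b\<in>Bs. representation Bs (w i) b *\<^sub>R b)"
      using real_vector.sum_representation_eq[OF ind wi[OF i] fin order_refl] by simp
    have "f (w i) = f (\<Sum>b\<in>Bs. representation Bs (w i) b *\<^sub>R b)"
      using eq by (rule arg_cong)
    also have "\<dots> = (\<Sum>b\<in>Bs. representation Bs (w i) b *\<^sub>R f b)"
      by (simp add: real_vector.linear_sum[OF f] real_vector.linear_scale[OF f])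
    finally have "f (w i) = (\<Sum>b\<in>Bs. representation Bs (w i) b *\<^sub>R f b)" .
    hence "B (f (w i)) (w i) = (\<Sum>b\<in>Bs. representation Bs (w i) b * B (f b) (w i))"
      by (simp add: B_sum1)
    thus "(\<Sum>b\<in>Bs. (\<sigma> i * B (f b) (w i)) * representation Bs (w i) b) = \<sigma> i * B (f (w i)) (w i)"
      by (simp add: sum_distrib_left mult_ac)
  qed
  finally show ?thesis .
qed

lemma basis_exists: "\<exists>Bs. independent Bs \<and> span Bs = span (S::'a set)"
proof -
  obtain Bs where "Bs \<subseteq> span S" "independent Bs" "span S \<subseteq> span Bs"
    using real_vector.maximal_independent_subset[of "span S"] by blast
  thus ?thesis
    by (metis real_vector.span_minimal real_vector.subspace_span subset_antisym)
qed

lemma trace_on_eq: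
  assumes on: "onf B I w \<sigma>" and f: "linear f" and fS: "\<And>x. x \<in> span (w ` I) \<Longrightarrow> f x \<in> span (w ` I)"
    and S: "S = span (w ` I)"
  shows "trace_on S f = (\<Sum>i\<in>I. \<sigma> i * B (f (w i)) (w i))"
proof -
  let ?Bs = "SOME Bs. independent Bs \<and> span Bs = S"
  have "independent ?Bs \<and> span ?Bs = S"
    using someI_ex[OF basis_exists[of "w ` I"]] S by (simp add: real_vector.span_span)
  thus ?thesis unfolding trace_on_def Let_def
    using trace_basis[OF on f fS] S by simp
qed

end

lemma exists_drop:
  assumes "P (0::nat)" "\<not> P n"
  shows "\<exists>j<n. P j \<and> \<not> P (Suc j)"
  using assms
proof (induction n)
  case 0 thus ?case by simp
next
  case (Suc n)
  show ?case
  proof (cases "P n")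
    case True thus ?thesis using Suc by auto
  next
    case False thus ?thesis using Suc by (metis less_Suc_eq)
  qed
qed

lemma filt_basis:
  fixes F :: "nat \<Rightarrow> 'a::euclidean_space set"
  assumes sub: "\<And>j. subspace (F j)" and dec: "\<And>j. F (Suc j) \<subseteq> F j" and zero: "F n = {0}"
  shows "\<exists>Bs. independent Bs \<and> span Bs = F 0 \<and> (\<forall>i. F i \<subseteq> span (Bs \<inter> F i))"
proof -
  have anti: "j \<le> i \<Longrightarrow> F i \<subseteq> F j" for i j
    using lift_Suc_antimono_le[of F, OF dec] by blast
  have "\<forall>d\<le>n. \<exists>Bs. independent Bs \<and> Bs \<subseteq> F (n - d) \<and> span Bs = F (n - d) \<and>
          (\<forall>i. n - d \<le> i \<longrightarrow> F i \<subseteq> span (Bs \<inter> F i))"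
  proof (intro allI impI)
    fix d assume "d \<le> n"
    thus "\<exists>Bs. independent Bs \<and> Bs \<subseteq> F (n - d) \<and> span Bs = F (n - d) \<and>
          (\<forall>i. n - d \<le> i \<longrightarrow> F i \<subseteq> span (Bs \<inter> F i))"
    proof (induction d)
      case 0
      have "F i \<subseteq> {0}" if "n \<le> i" for i using anti[OF that] zero by simp
      thus ?case using zero by (intro exI[of _ "{}"]) (auto simp: real_vector.span_empty real_vector.independent_empty)
    next
      case (Suc d)
      then obtain Bs where Bs: "independent Bs" "Bs \<subseteq> F (n - d)" "span Bs = F (n - d)"
          "\<forall>i. n - d \<le> i \<longrightarrow> F i \<subseteq> span (Bs \<inter> F i)" by auto
      define j where "j = n - Suc d"
      have jd: "Suc j = n - d" using Suc.prems by (simp add: j_def)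
      have "Bs \<subseteq> F j" using Bs(2) dec[of j] jd by auto
      then obtain C where C: "Bs \<subseteq> C" "C \<subseteq> F j" "independent C" "F j \<subseteq> span C"
        using real_vector.maximal_independent_subset_extend[OF _ Bs(1)] by metis
      have spC: "span C = F j"
        using C real_vector.span_minimal[OF C(2) sub[of j]] by auto
      have "\<forall>i. j \<le> i \<longrightarrow> F i \<subseteq> span (C \<inter> F i)"
      proof (intro allI impI)
        fix i assume "j \<le> i"
        show "F i \<subseteq> span (C \<inter> F i)"
        proof (cases "i = j")
          case True thus ?thesis using C by (simp add: Int_absorb2)
        next
          case False
          hence "n - d \<le> i" using \<open>j \<le> i\<close> jd by simp
          hence "F i \<subseteq> span (Bs \<inter> F i)" using Bs(4) by simp
          also have "\<dots> \<subseteq> span (C \<inter> F i)" using C(1) by (intro real_vector.span_mono) auto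
          finally show ?thesis .
        qed
      qed
      thus ?case using C spC by (intro exI[of _ C]) (simp add: j_def)
    qed
  qed
  from this[rule_format, of n] show ?thesis by auto
qed

lemma filt_trace_zero:
  fixes F :: "nat \<Rightarrow> 'a::euclidean_space set"
  assumes sub: "\<And>j. subspace (F j)" and dec: "\<And>j. F (Suc j) \<subseteq> F j" and zero: "F n = {0}"
    and f: "linear f" and fF: "\<And>j x. x \<in> F j \<Longrightarrow> f x \<in> F (Suc j)"
  shows "\<exists>Bs. independent Bs \<and> span Bs = F 0 \<and> (\<Sum>b\<in>Bs. representation Bs (f b) b) = 0"
proof -
  obtain Bs where Bs: "independent Bs" "span Bs = F 0" "\<forall>i. F i \<subseteq> span (Bs \<inter> F i)"
    using filt_basis[OF sub dec zero] by blast
  have "representation Bs (f b) b = 0" if b: "b \<in> Bs" for b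
  proof -
    have "b \<noteq> 0" using Bs(1) b real_vector.dependent_zero by blast
    have "b \<in> F 0" using Bs(2) real_vector.span_base[OF b] by simp
    moreover have "b \<notin> F n" using zero \<open>b \<noteq> 0\<close> by simp
    ultimately obtain j where j: "b \<in> F j" "b \<notin> F (Suc j)"
      using exists_drop[of "\<lambda>j. b \<in> F j" n] by blast
    have "f b \<in> span (Bs \<inter> F (Suc j))" using fF[OF j(1)] Bs(3) by blast
    hence "representation Bs (f b) = representation (Bs \<inter> F (Suc j)) (f b)"
      using real_vector.representation_extend[OF Bs(1)] by blast
    moreover have "representation (Bs \<inter> F (Suc j)) (f b) b = 0"
      using real_vector.representation_ne_zero j(2) by blast
    ultimately show ?thesis by simp
  qed
  thus ?thesis using Bs by (intro exI[of _ Bs]) simp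
qed

locale metric_lie = symform +
  fixes br :: "'a \<Rightarrow> 'a \<Rightarrow> 'a"
  assumes brbil: "bilinear br" and alt: "\<And>x. br x x = 0"
begin

lemma br_add1[simp]: "br (x + y) z = br x z + br y z" using bilinear_ladd[OF brbil] .
lemma br_add2[simp]: "br z (x + y) = br z x + br z y" using bilinear_radd[OF brbil] .
lemma br_diff1[simp]: "br (x - y) z = br x z - br y z" using bilinear_lsub[OF brbil] .
lemma br_diff2[simp]: "br z (x - y) = br z x - br z y" using bilinear_rsub[OF brbil] .
lemma br_neg1[simp]: "br (- x) z = - br x z" using bilinear_lneg[OF brbil] .
lemma br_neg2[simp]: "br z (- x) = - br z x" using bilinear_rneg[OF brbil] .
lemma br_scale1[simp]: "br (c *\<^sub>R x) z = c *\<^sub>R br x z" using bilinear_lmul[OF brbil] .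
lemma br_scale2[simp]: "br z (c *\<^sub>R x) = c *\<^sub>R br z x" using bilinear_rmul[OF brbil] .
lemma br_zero1[simp]: "br 0 z = 0" using bilinear_lzero[OF brbil] by simp
lemma br_zero2[simp]: "br z 0 = 0" using bilinear_rzero[OF brbil] by simp
lemma br_lin1: "linear (\<lambda>x. br x y)" using brbil by (simp add: bilinear_def)
lemma br_lin2: "linear (br x)" using brbil by (simp add: bilinear_def)
lemma br_sum1: "br (sum f S) z = (\<Sum>i\<in>S. br (f i) z)"
  using real_vector.linear_sum[OF br_lin1, of f S z] by simp
lemma br_sum2: "br z (sum f S) = (\<Sum>i\<in>S. br z (f i))"
  using real_vector.linear_sum[OF br_lin2, of z f S] by simp

definition kos :: "'a \<Rightarrow> 'a \<Rightarrow> 'a \<Rightarrow> real" where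
  "kos X Y W = B (br X Y) W - B (br Y W) X + B (br W X) Y"

lemma kos_add1: "kos (X + X') Y W = kos X Y W + kos X' Y W" by (simp add: kos_def)
lemma kos_add2: "kos X (Y + Y') W = kos X Y W + kos X Y' W" by (simp add: kos_def)
lemma kos_add3: "kos X Y (W + W') = kos X Y W + kos X Y W'" by (simp add: kos_def)
lemma kos_scale1: "kos (c *\<^sub>R X) Y W = c * kos X Y W" by (simp add: kos_def algebra_simps)
lemma kos_scale2: "kos X (c *\<^sub>R Y) W = c * kos X Y W" by (simp add: kos_def algebra_simps)
lemma kos_scale3: "kos X Y (c *\<^sub>R W) = c * kos X Y W" by (simp add: kos_def algebra_simps)
lemma kos_zero2[simp]: "kos X 0 W = 0" by (simp add: kos_def)
lemma kos_zero1[simp]: "kos 0 Y W = 0" by (simp add: kos_def)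
lemma br_anti: "br y x = - br x y"
proof -
  have "br (x + y) (x + y) = br x x + br x y + (br y x + br y y)" by (simp only: br_add1 br_add2 add_ac)
  hence "br x y + br y x = 0" by (simp add: alt)
  thus ?thesis by (simp add: eq_neg_iff_add_eq_0 add.commute)
qed

lemma kos_self: "kos X Y X = 2 * B (br X Y) X"
  by (simp add: kos_def br_anti[of Y X] alt)

lemma kos_lin3: "linear (\<lambda>W. kos X Y W / 2)"
  by (rule linearI) (simp_all add: kos_add3 kos_scale3 add_divide_distrib)

context
  fixes I :: "'i set" and w :: "'i \<Rightarrow> 'a" and \<sigma> :: "'i \<Rightarrow> real" and S :: "'a set"
  assumes on: "onf B I w \<sigma>" and S: "S = span (w ` I)"
begin

lemma lc_ex1: "\<exists>!Z. Z \<in> S \<and> (\<forall>W\<in>S. 2 * B Z W = kos X Y W)"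
proof -
  let ?Z = "\<Sum>i\<in>I. (\<sigma> i * (kos X Y (w i) / 2)) *\<^sub>R w i"
  have Z: "?Z \<in> S" "\<And>W. W \<in> S \<Longrightarrow> B ?Z W = kos X Y W / 2"
    using riesz[OF on kos_lin3[of X Y]] S by auto
  show ?thesis
  proof (rule ex1I[of _ ?Z])
    show "?Z \<in> S \<and> (\<forall>W\<in>S. 2 * B ?Z W = kos X Y W)"
    proof (intro conjI ballI)
      show "?Z \<in> S" by (rule Z(1))
    next
      fix W assume "W \<in> S" thus "2 * B ?Z W = kos X Y W" using Z(2)[of W] by simp
    qed
  next
    fix Z' assume Z': "Z' \<in> S \<and> (\<forall>W\<in>S. 2 * B Z' W = kos X Y W)"
    have wS: "w i \<in> S" if "i \<in> I" for i using S real_vector.span_base[of "w i" "w ` I"] that by simp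
    show "Z' = ?Z"
    proof (rule eq_by_basis[OF on])
      show "Z' \<in> span (w ` I)" using Z' S by simp
      show "?Z \<in> span (w ` I)" using Z(1) S by simp
      fix i assume i: "i \<in> I"
      show "B Z' (w i) = B ?Z (w i)"
        using Z'[THEN conjunct2, rule_format, OF wS[OF i]] Z(2)[OF wS[OF i]] by simp
    qed
  qed
qed

lemma lc_in: "levi_civita br B S X Y \<in> S"
  and lc_B: "W \<in> S \<Longrightarrow> 2 * B (levi_civita br B S X Y) W = kos X Y W"
proof -
  have e: "levi_civita br B S X Y = (THE Z. Z \<in> S \<and> (\<forall>W\<in>S. 2 * B Z W = kos X Y W))"
    by (simp add: levi_civita_def kos_def)
  show "levi_civita br B S X Y \<in> S" using theI'[OF lc_ex1[of X Y]] unfolding e by auto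
  show "W \<in> S \<Longrightarrow> 2 * B (levi_civita br B S X Y) W = kos X Y W"
    using theI'[OF lc_ex1[of X Y]] unfolding e by auto
qed

lemma lc_B': "W \<in> S \<Longrightarrow> B (levi_civita br B S X Y) W = kos X Y W / 2"
  using lc_B by (simp add: field_simps)

lemma wS: "i \<in> I \<Longrightarrow> w i \<in> S" using S real_vector.span_base[of "w i" "w ` I"] by simp

lemma lc_eq:
  assumes "Z \<in> S" "\<And>i. i \<in> I \<Longrightarrow> 2 * B Z (w i) = kos X Y (w i)"
  shows "levi_civita br B S X Y = Z"
proof (rule eq_by_basis[OF on])
  show "levi_civita br B S X Y \<in> span (w ` I)" using lc_in S by simp
  show "Z \<in> span (w ` I)" using assms(1) S by simp
  fix i assume i: "i \<in> I"
  show "B (levi_civita br B S X Y) (w i) = B Z (w i)"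
    using lc_B[OF wS[OF i], of X Y] assms(2)[OF i] by simp
qed

lemma S_add: "x \<in> S \<Longrightarrow> y \<in> S \<Longrightarrow> x + y \<in> S" using S real_vector.span_add by blast
lemma S_diff: "x \<in> S \<Longrightarrow> y \<in> S \<Longrightarrow> x - y \<in> S" using S real_vector.span_diff by blast
lemma S_scale: "x \<in> S \<Longrightarrow> c *\<^sub>R x \<in> S" using S real_vector.span_scale by blast
lemma S_zero: "0 \<in> S" using S real_vector.span_zero by blast
lemma S_sub: "subspace S" using S real_vector.subspace_span by blast

abbreviation "lc \<equiv> levi_civita br B S"

lemma lc_add1: "lc (X + X') Y = lc X Y + lc X' Y"
  by (rule lc_eq) (simp_all add: lc_in S_add kos_add1 lc_B wS)
lemma lc_add2: "lc X (Y + Y') = lc X Y + lc X Y'"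
  by (rule lc_eq) (simp_all add: lc_in S_add kos_add2 lc_B wS)
lemma lc_scale1: "lc (c *\<^sub>R X) Y = c *\<^sub>R lc X Y"
  by (rule lc_eq) (simp_all add: lc_in S_scale kos_scale1 lc_B wS)
lemma lc_scale2: "lc X (c *\<^sub>R Y) = c *\<^sub>R lc X Y"
  by (rule lc_eq) (simp_all add: lc_in S_scale kos_scale2 lc_B wS)
lemma lc_lin1: "linear (\<lambda>X. lc X Y)"
  by (rule linearI) (simp_all add: lc_add1 lc_scale1)
lemma lc_lin2: "linear (lc X)"
  by (rule linearI) (simp_all add: lc_add2 lc_scale2)
lemma lc_diff1: "lc (X - X') Y = lc X Y - lc X' Y"
  using real_vector.linear_diff[OF lc_lin1] by blast
lemma lc_diff2: "lc X (Y - Y') = lc X Y - lc X Y'"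
  using real_vector.linear_diff[OF lc_lin2] by blast
lemma lc_zero1: "lc 0 Y = 0"
  using real_vector.linear_0[OF lc_lin1] by blast
lemma lc_zero2: "lc X 0 = 0"
  using real_vector.linear_0[OF lc_lin2] by blast
lemma lc_sum2: "lc X (sum f A) = (\<Sum>i\<in>A. lc X (f i))"
  using real_vector.linear_sum[OF lc_lin2] by blast
lemma lc_sum1: "lc (sum f A) Y = (\<Sum>i\<in>A. lc (f i) Y)"
  using real_vector.linear_sum[OF lc_lin1[of Y], of f A] by simp

lemma curv_lin: "linear (\<lambda>Z. curvature br B S Z X Y)"
  by (rule linearI) (simp_all add: curvature_def lc_add1 lc_add2 lc_scale1 lc_scale2 algebra_simps)

lemma curv_in: "curvature br B S Z X Y \<in> S"
  unfolding curvature_def by (intro S_diff lc_in)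

lemma curv_B: "W \<in> S \<Longrightarrow> B (curvature br B S Z X Y) W =
   kos Z (lc X Y) W / 2 - kos X (lc Z Y) W / 2 - kos (br Z X) Y W / 2"
  unfolding curvature_def by (simp add: lc_B')

lemma ricci_eq: "ricci br B S X Y = (\<Sum>i\<in>I. \<sigma> i *
   (kos (w i) (lc X Y) (w i) / 2 - kos X (lc (w i) Y) (w i) / 2 - kos (br (w i) X) Y (w i) / 2))"
proof -
  have "ricci br B S X Y = (\<Sum>i\<in>I. \<sigma> i * B (curvature br B S (w i) X Y) (w i))"
    unfolding ricci_def
  proof (rule trace_on_eq[OF on curv_lin _ S])
    fix x show "curvature br B S x X Y \<in> span (w ` I)" using curv_in S by simp
  qed
  also have "\<dots> = (\<Sum>i\<in>I. \<sigma> i *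
   (kos (w i) (lc X Y) (w i) / 2 - kos X (lc (w i) Y) (w i) / 2 - kos (br (w i) X) Y (w i) / 2))"
    by (intro sum.cong refl) (simp add: curv_B wS)
  finally show ?thesis .
qed

lemma trace_eq: "linear f \<Longrightarrow> (\<And>x. x \<in> S \<Longrightarrow> f x \<in> S) \<Longrightarrow>
  trace_on S f = (\<Sum>i\<in>I. \<sigma> i * B (f (w i)) (w i))"
  using trace_on_eq[OF on] S by auto

lemma adj_ex1: assumes f: "linear f" shows "\<exists>!u. u \<in> S \<and> (\<forall>W\<in>S. B u W = B v (f W))"
proof -
  have lin: "linear (\<lambda>W. B v (f W))" using f lin2 by (simp add: linear_compose[unfolded o_def])
  let ?Z = "\<Sum>i\<in>I. (\<sigma> i * B v (f (w i))) *\<^sub>R w i"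
  have Z: "?Z \<in> S" "\<And>W. W \<in> S \<Longrightarrow> B ?Z W = B v (f W)"
    using riesz[OF on lin] S by auto
  show ?thesis
  proof (rule ex1I[of _ ?Z])
    show "?Z \<in> S \<and> (\<forall>W\<in>S. B ?Z W = B v (f W))" using Z by simp
  next
    fix Z' assume Z': "Z' \<in> S \<and> (\<forall>W\<in>S. B Z' W = B v (f W))"
    show "Z' = ?Z"
    proof (rule eq_by_basis[OF on])
      show "Z' \<in> span (w ` I)" using Z' S by simp
      show "?Z \<in> span (w ` I)" using Z(1) S by simp
      fix i assume i: "i \<in> I"
      show "B Z' (w i) = B ?Z (w i)"
        using Z'[THEN conjunct2, rule_format, OF wS[OF i]] Z(2)[OF wS[OF i]] by simp
    qed
  qed
qed

lemma adj_in: "linear f \<Longrightarrow> adjoint_on B S f v \<in> S"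
  and adj_B: "linear f \<Longrightarrow> W \<in> S \<Longrightarrow> B (adjoint_on B S f v) W = B v (f W)"
  using theI'[OF adj_ex1[of f v]] unfolding adjoint_on_def by auto

lemma adj_lin: assumes f: "linear f" shows "linear (adjoint_on B S f)"
proof (rule linearI)
  fix x y
  show "adjoint_on B S f (x + y) = adjoint_on B S f x + adjoint_on B S f y"
  proof (rule eq_by_basis[OF on])
    show "adjoint_on B S f (x + y) \<in> span (w ` I)" using adj_in[OF f] S by simp
    show "adjoint_on B S f x + adjoint_on B S f y \<in> span (w ` I)" using adj_in[OF f] S_add S by simp
    fix i assume i: "i \<in> I"
    show "B (adjoint_on B S f (x + y)) (w i) = B (adjoint_on B S f x + adjoint_on B S f y) (w i)"
      using adj_B[OF f wS[OF i]] by simp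
  qed
next
  fix c x
  show "adjoint_on B S f (c *\<^sub>R x) = c *\<^sub>R adjoint_on B S f x"
  proof (rule eq_by_basis[OF on])
    show "adjoint_on B S f (c *\<^sub>R x) \<in> span (w ` I)" using adj_in[OF f] S by simp
    show "c *\<^sub>R adjoint_on B S f x \<in> span (w ` I)" using adj_in[OF f] S_scale S by simp
    fix i assume i: "i \<in> I"
    show "B (adjoint_on B S f (c *\<^sub>R x)) (w i) = B (c *\<^sub>R adjoint_on B S f x) (w i)"
      using adj_B[OF f wS[OF i]] by simp
  qed
qed


lemma tr_expand:
  assumes f: "linear f" and h: "\<And>x. x \<in> S \<Longrightarrow> h x \<in> S"
  shows "(\<Sum>i\<in>I. \<sigma> i * B (f (h (w i))) (w i)) =
         (\<Sum>i\<in>I. \<Sum>j\<in>I. \<sigma> i * \<sigma> j * B (h (w i)) (w j) * B (f (w j)) (w i))"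
proof (rule sum.cong[OF refl])
  fix i assume i: "i \<in> I"
  have hw: "h (w i) \<in> span (w ` I)" using h[OF wS[OF i]] S by simp
  have "f (h (w i)) = f (\<Sum>j\<in>I. (\<sigma> j * B (h (w i)) (w j)) *\<^sub>R w j)"
    using expand[OF on hw] by (rule arg_cong)
  also have "\<dots> = (\<Sum>j\<in>I. (\<sigma> j * B (h (w i)) (w j)) *\<^sub>R f (w j))"
    by (simp add: real_vector.linear_sum[OF f] real_vector.linear_scale[OF f])
  finally show "\<sigma> i * B (f (h (w i))) (w i) =
      (\<Sum>j\<in>I. \<sigma> i * \<sigma> j * B (h (w i)) (w j) * B (f (w j)) (w i))"
    by (simp add: B_sum1 sum_distrib_left mult_ac)
qed

lemma tr_comm:
  assumes f: "linear f" and h: "linear h" and fS: "\<And>x. x \<in> S \<Longrightarrow> f x \<in> S"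
    and hS: "\<And>x. x \<in> S \<Longrightarrow> h x \<in> S"
  shows "(\<Sum>i\<in>I. \<sigma> i * B (f (h (w i))) (w i)) = (\<Sum>i\<in>I. \<sigma> i * B (h (f (w i))) (w i))"
proof -
  have "(\<Sum>i\<in>I. \<sigma> i * B (f (h (w i))) (w i)) =
         (\<Sum>i\<in>I. \<Sum>j\<in>I. \<sigma> i * \<sigma> j * B (h (w i)) (w j) * B (f (w j)) (w i))"
    by (rule tr_expand[OF f hS])
  also have "\<dots> = (\<Sum>j\<in>I. \<Sum>i\<in>I. \<sigma> i * \<sigma> j * B (h (w i)) (w j) * B (f (w j)) (w i))"
    by (rule sum.swap)
  also have "\<dots> = (\<Sum>j\<in>I. \<Sum>i\<in>I. \<sigma> j * \<sigma> i * B (f (w j)) (w i) * B (h (w i)) (w j))"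
    by (simp add: mult_ac)
  also have "\<dots> = (\<Sum>i\<in>I. \<sigma> i * B (h (f (w i))) (w i))"
    by (rule tr_expand[OF h fS, symmetric])
  finally show ?thesis .
qed

end
end

locale setting = metric_lie B br for B :: "'a::euclidean_space \<Rightarrow> 'a \<Rightarrow> real" and br +
  fixes g a :: "'a set" and k m :: nat and e u :: "nat \<Rightarrow> 'a" and eps eta :: "nat \<Rightarrow> real"
  assumes jac: "\<And>x y z. br x (br y z) + br y (br z x) + br z (br x y) = 0"
    and dec: "standard_decomposition br B g a"
    and onb_a: "orthonormal_basis B a k e eps"
    and onb_g: "orthonormal_basis B g m u eta"
begin

lemma g_sub: "subspace g" using dec by (simp add: standard_decomposition_def lie_ideal_def)
lemma a_sub: "subspace a" using dec by (simp add: standard_decomposition_def abelian_subalgebra_def)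
lemma ideal1: "x \<in> g \<Longrightarrow> br x y \<in> g" using dec by (simp add: standard_decomposition_def lie_ideal_def)
lemma ideal2: "x \<in> g \<Longrightarrow> br y x \<in> g" using dec by (simp add: standard_decomposition_def lie_ideal_def)
lemma ab: "x \<in> a \<Longrightarrow> y \<in> a \<Longrightarrow> br x y = 0"
  using dec by (simp add: standard_decomposition_def abelian_subalgebra_def)
lemma decomp: "\<exists>x\<in>g. \<exists>y\<in>a. v = x + y" using dec by (simp add: standard_decomposition_def)
lemma Bga: "x \<in> g \<Longrightarrow> y \<in> a \<Longrightarrow> B x y = 0" using dec by (simp add: standard_decomposition_def)
lemma Bag: "x \<in> g \<Longrightarrow> y \<in> a \<Longrightarrow> B y x = 0" using Bga sym by metis

lemma u_in: "i < m \<Longrightarrow> u i \<in> g" using onb_g by (simp add: orthonormal_basis_def)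
lemma e_in: "s < k \<Longrightarrow> e s \<in> a" using onb_a by (simp add: orthonormal_basis_def)
lemma g_span: "g = span (u ` {..<m})" using onb_g by (simp add: orthonormal_basis_def)
lemma a_span: "a = span (e ` {..<k})" using onb_a by (simp add: orthonormal_basis_def)
lemma Buu: "i < m \<Longrightarrow> j < m \<Longrightarrow> B (u i) (u j) = (if i = j then eta i else 0)"
  using onb_g by (simp add: orthonormal_basis_def)
lemma Bee: "i < k \<Longrightarrow> j < k \<Longrightarrow> B (e i) (e j) = (if i = j then eps i else 0)"
  using onb_a by (simp add: orthonormal_basis_def)
lemma eta_sq: "i < m \<Longrightarrow> eta i * eta i = 1" using onb_g by (auto simp: orthonormal_basis_def)
lemma eps_sq: "i < k \<Longrightarrow> eps i * eps i = 1" using onb_a by (auto simp: orthonormal_basis_def)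

lemma onf_g: "onf B {..<m} u eta" using Buu eta_sq by (simp add: onf_def)
lemma onf_a: "onf B {..<k} e eps" using Bee eps_sq by (simp add: onf_def)

abbreviation "IV \<equiv> Inl ` {..<m} \<union> Inr ` {..<k}"
abbreviation "wV \<equiv> case_sum u e"
abbreviation "sV \<equiv> case_sum eta eps"

lemma sum_V: "(\<Sum>i\<in>IV. F i) = (\<Sum>j<m. F (Inl j)) + (\<Sum>s<k. F (Inr s))"
  by (subst sum.union_disjoint) (auto simp: sum.reindex)

lemma onf_V: "onf B IV wV sV"
  unfolding onf_def using Buu Bee eta_sq eps_sq Bga[OF u_in e_in] Bag[OF u_in e_in]
  by (auto split: if_splits)

lemma V_span: "UNIV = span (wV ` IV)"
proof -
  have "wV ` IV = u ` {..<m} \<union> e ` {..<k}" by (auto simp: image_Un image_image)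
  hence "span (wV ` IV) = {x + y | x y. x \<in> g \<and> y \<in> a}"
    by (simp add: real_vector.span_Un g_span[symmetric] a_span[symmetric])
  thus ?thesis using decomp by blast
qed

lemma bre_g1: "s < k \<Longrightarrow> br (e s) Y \<in> g"
proof -
  assume s: "s < k"
  obtain x y where xy: "x \<in> g" "y \<in> a" "Y = x + y" using decomp by blast
  thus ?thesis using ideal2[OF xy(1)] ab[OF e_in[OF s] xy(2)] by simp
qed
lemma bre_g2: "s < k \<Longrightarrow> br Y (e s) \<in> g"
  using bre_g1 br_anti[of Y "e _"] g_sub real_vector.subspace_neg by metis

end

context setting begin

abbreviation "ph s \<equiv> (\<lambda>v. br v (e s))"
abbreviation "P s \<equiv> adjoint_on B g (ph s)"
abbreviation "LC \<equiv> levi_civita br B UNIV"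
abbreviation "lg \<equiv> levi_civita br B g"

lemma LCB: "B (LC X Y) W = kos X Y W / 2"
  using lc_B'[OF onf_V V_span] by simp

lemma LC_eq:
  assumes "\<And>j. j < m \<Longrightarrow> 2 * B Z (u j) = kos X Y (u j)"
    and "\<And>s. s < k \<Longrightarrow> 2 * B Z (e s) = kos X Y (e s)"
  shows "LC X Y = Z"
  using assms by (intro lc_eq[OF onf_V V_span]) auto

lemma lgB: "W \<in> g \<Longrightarrow> B (lg X Y) W = kos X Y W / 2"
  using lc_B'[OF onf_g g_span] by simp
lemma lg_in: "lg X Y \<in> g"
  using lc_in[OF onf_g g_span] by simp

lemma ph_lin: "linear (ph s)" by (rule br_lin1)
lemma ph_g: "x \<in> g \<Longrightarrow> ph s x \<in> g" by (rule ideal1)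
lemma P_in: "P s v \<in> g" using adj_in[OF onf_g g_span ph_lin] by simp
lemma P_B: "W \<in> g \<Longrightarrow> B (P s v) W = B v (ph s W)"
  using adj_B[OF onf_g g_span ph_lin] by simp
lemma P_lin: "linear (P s)" using adj_lin[OF onf_g g_span ph_lin] by simp

lemma sum_e_B: "t < k \<Longrightarrow> B (\<Sum>s<k. c s *\<^sub>R e s) (e t) = c t * eps t"
proof -
  assume t: "t < k"
  have "B (\<Sum>s<k. c s *\<^sub>R e s) (e t) = (\<Sum>s<k. c s * B (e s) (e t))"
    by (simp add: B_sum1)
  also have "\<dots> = (\<Sum>s<k. if s = t then c t * eps t else 0)"
    by (rule sum.cong) (auto simp: Bee t)
  also have "\<dots> = c t * eps t" using t by simp
  finally show ?thesis .
qed

lemma eps_sq2: "t < k \<Longrightarrow> eps t * (eps t * z) = z"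
  by (metis mult.assoc eps_sq mult_1)
lemma eta_sq2: "t < m \<Longrightarrow> eta t * (eta t * z) = z"
  by (metis mult.assoc eta_sq mult_1)

lemma sum_e_g: "x \<in> g \<Longrightarrow> B (\<Sum>s<k. c s *\<^sub>R e s) x = 0"
  by (simp add: B_sum1 Bag e_in)

lemma F1:
  assumes X: "X \<in> g" and Y: "Y \<in> g"
  shows "LC X Y = lg X Y - (\<Sum>s<k. (eps s * ((B (ph s X) Y + B X (ph s Y)) / 2)) *\<^sub>R e s)"
proof (rule LC_eq)
  fix j assume j: "j < m"
  show "2 * B (lg X Y - (\<Sum>s<k. (eps s * ((B (ph s X) Y + B X (ph s Y)) / 2)) *\<^sub>R e s)) (u j) = kos X Y (u j)"
    using j by (simp add: lgB u_in sum_e_g)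
next
  fix t assume t: "t < k"
  have "kos X Y (e t) = - B (ph t Y) X - B (ph t X) Y"
    unfolding kos_def using Bga[OF ideal1[OF X] e_in[OF t]] br_anti[of "e t" X] by simp
  moreover have "2 * B (lg X Y - (\<Sum>s<k. (eps s * ((B (ph s X) Y + B X (ph s Y)) / 2)) *\<^sub>R e s)) (e t)
     = - (B (ph t X) Y + B X (ph t Y))"
    using t by (simp add: sum_e_B eps_sq2[OF t] Bga[OF lg_in e_in[OF t]] algebra_simps)
  ultimately show "2 * B (lg X Y - (\<Sum>s<k. (eps s * ((B (ph s X) Y + B X (ph s Y)) / 2)) *\<^sub>R e s)) (e t) = kos X Y (e t)"
    using sym[of X "ph t Y"] by linarith
qed

lemma F2:
  assumes X: "X \<in> g" and s: "s < k"
  shows "LC X (e s) = (1/2) *\<^sub>R (ph s X + P s X)"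
proof (rule LC_eq)
  fix j assume j: "j < m"
  have "kos X (e s) (u j) = B (ph s X) (u j) + B (ph s (u j)) X"
    unfolding kos_def using Bga[OF ideal1[OF u_in[OF j]] e_in[OF s]] br_anti[of "e s" "u j"] by simp
  thus "2 * B ((1/2) *\<^sub>R (ph s X + P s X)) (u j) = kos X (e s) (u j)"
    using P_B[OF u_in[OF j]] sym[of X "ph s (u j)"] by simp
next
  fix t assume t: "t < k"
  have "kos X (e s) (e t) = 0"
    unfolding kos_def using Bga[OF ideal1[OF X] e_in[OF t]] Bga[OF ideal2[OF X] e_in[OF s]]
      ab[OF e_in[OF s] e_in[OF t]] by simp
  thus "2 * B ((1/2) *\<^sub>R (ph s X + P s X)) (e t) = kos X (e s) (e t)"
    using Bga[OF ph_g[OF X] e_in[OF t]] Bga[OF P_in e_in[OF t]] by simp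
qed

lemma F3:
  assumes X: "X \<in> g" and s: "s < k"
  shows "LC (e s) X = (1/2) *\<^sub>R (P s X - ph s X)"
proof (rule LC_eq)
  fix j assume j: "j < m"
  have "kos (e s) X (u j) = - B (ph s X) (u j) + B (ph s (u j)) X"
    unfolding kos_def using Bga[OF ideal1[OF X] e_in[OF s]] br_anti[of "e s" X] by simp
  thus "2 * B ((1/2) *\<^sub>R (P s X - ph s X)) (u j) = kos (e s) X (u j)"
    using P_B[OF u_in[OF j]] sym[of X "ph s (u j)"] by simp
next
  fix t assume t: "t < k"
  have "kos (e s) X (e t) = 0"
    unfolding kos_def using Bga[OF ideal2[OF X] e_in[OF t]] Bga[OF ideal1[OF X] e_in[OF s]]
      ab[OF e_in[OF t] e_in[OF s]] br_anti[of "e s" X] Bga[OF ph_g[OF X] e_in[OF t]] by simp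
  thus "2 * B ((1/2) *\<^sub>R (P s X - ph s X)) (e t) = kos (e s) X (e t)"
    using Bga[OF ph_g[OF X] e_in[OF t]] Bga[OF P_in e_in[OF t]] by simp
qed

lemma F4:
  assumes s: "s < k" and r: "r < k"
  shows "LC (e s) (e r) = 0"
proof (rule LC_eq)
  fix j assume j: "j < m"
  show "2 * B 0 (u j) = kos (e s) (e r) (u j)"
    unfolding kos_def using ab[OF e_in[OF s] e_in[OF r]] Bga[OF bre_g1[OF r] e_in[OF s]]
      Bga[OF bre_g2[OF s] e_in[OF r]] by simp
next
  fix t assume t: "t < k"
  show "2 * B 0 (e t) = kos (e s) (e r) (e t)"
    unfolding kos_def using ab[OF e_in[OF s] e_in[OF r]] ab[OF e_in[OF r] e_in[OF t]]
      ab[OF e_in[OF t] e_in[OF s]] by simp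
qed


lemma kos_lin2: "linear (\<lambda>Y. kos X Y W)"
  by (rule linearI) (simp_all add: kos_add2 kos_scale2)

lemma kos_sub_sum: "kos X (A - (\<Sum>s<k. d s *\<^sub>R e s)) W = kos X A W - (\<Sum>s<k. d s * kos X (e s) W)"
proof -
  have L: "linear (\<lambda>Y. kos X Y W)" by (rule kos_lin2)
  have "kos X (A - (\<Sum>s<k. d s *\<^sub>R e s)) W = kos X A W - kos X (\<Sum>s<k. d s *\<^sub>R e s) W"
    using real_vector.linear_diff[OF L] by simp
  also have "kos X (\<Sum>s<k. d s *\<^sub>R e s) W = (\<Sum>s<k. kos X (d s *\<^sub>R e s) W)"
    using real_vector.linear_sum[OF L, of "\<lambda>s. d s *\<^sub>R e s" "{..<k}"] by simp
  also have "\<dots> = (\<Sum>s<k. d s * kos X (e s) W)" by (simp add: kos_scale2)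
  finally show ?thesis .
qed

lemma kos_neg1: "kos (- X) Y W = - kos X Y W" by (simp add: kos_def)
lemma kos_scale2': "kos X (c *\<^sub>R Y) W = c * kos X Y W" by (rule kos_scale2)

lemma kos_self_e: "s < k \<Longrightarrow> kos (e s) Y (e s) = 0"
  using kos_self[of "e s" Y] Bga[OF bre_g1 e_in] by simp

lemma kos_e_mid: "X \<in> g \<Longrightarrow> W \<in> g \<Longrightarrow> s < k \<Longrightarrow> kos X (e s) W = B (ph s X) W + B (ph s W) X"
  unfolding kos_def using Bga[OF ideal1[of W X] e_in] br_anti[of "e s" W] by simp

lemma kos_gge: "X \<in> g \<Longrightarrow> Y \<in> g \<Longrightarrow> s < k \<Longrightarrow> kos X Y (e s) = - B (ph s Y) X - B (ph s X) Y"
  unfolding kos_def using Bga[OF ideal1[of X Y] e_in] br_anti[of "e s" X] by simp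

lemma kos_egg: "X \<in> g \<Longrightarrow> W \<in> g \<Longrightarrow> s < k \<Longrightarrow> kos (e s) X W = - B (ph s X) W + B (ph s W) X"
  unfolding kos_def using Bga[OF ideal1[of X W] e_in] br_anti[of "e s" X] by simp

lemma kos_geg: "X \<in> g \<Longrightarrow> W \<in> g \<Longrightarrow> r < k \<Longrightarrow> kos X (e r) W = B (ph r X) W + B (ph r W) X"
  by (rule kos_e_mid)

lemma ricV: "ricci br B UNIV X Y =
   (\<Sum>j<m. eta j * (kos (u j) (LC X Y) (u j) / 2 - kos X (LC (u j) Y) (u j) / 2 - kos (br (u j) X) Y (u j) / 2))
 + (\<Sum>s<k. eps s * (kos (e s) (LC X Y) (e s) / 2 - kos X (LC (e s) Y) (e s) / 2 - kos (br (e s) X) Y (e s) / 2))"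
  using ricci_eq[OF onf_V V_span, of X Y] by (simp add: sum_V)

lemma ricg: "ricci br B g X Y =
   (\<Sum>j<m. eta j * (kos (u j) (lg X Y) (u j) / 2 - kos X (lg (u j) Y) (u j) / 2 - kos (br (u j) X) Y (u j) / 2))"
  using ricci_eq[OF onf_g g_span, of X Y] by simp

lemma trg: "linear f \<Longrightarrow> (\<And>x. x \<in> g \<Longrightarrow> f x \<in> g) \<Longrightarrow> trace_on g f = (\<Sum>j<m. eta j * B (f (u j)) (u j))"
  using trace_eq[OF onf_g g_span] by simp

lemma parg: "x \<in> g \<Longrightarrow> B x y = (\<Sum>j<m. eta j * B x (u j) * B (u j) y)"
  using parseval[OF onf_g] g_span by simp

definition cc :: "nat \<Rightarrow> 'a \<Rightarrow> 'a \<Rightarrow> real" where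
  "cc s X Y = (B (ph s X) Y + B X (ph s Y)) / 2"

lemma F1': "X \<in> g \<Longrightarrow> Y \<in> g \<Longrightarrow> LC X Y = lg X Y - (\<Sum>s<k. (eps s * cc s X Y) *\<^sub>R e s)"
  using F1 by (simp add: cc_def)

lemma sum_swap_lemma:
  "(\<Sum>j<m. eta j * (\<Sum>s<k. F s j)) = (\<Sum>s<k. \<Sum>j<m. eta j * F s j)"
  by (simp add: sum_distrib_left sum.swap[of _ "{..<k}"])

lemma formula1:
  assumes v: "v \<in> g" and w: "w \<in> g"
  shows "ricci br B UNIV v w = ricci br B g v w +
        (\<Sum>s<k. 1/2 * eps s * B (ph s (P s v) - P s (ph s v)) w
               - 1/2 * eps s * B (ph s v + P s v) w * trace_on g (ph s))"
proof -
  define T where "T s = trace_on g (ph s)" for s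
  have T: "T s = (\<Sum>j<m. eta j * B (ph s (u j)) (u j))" for s
    unfolding T_def using trg[OF ph_lin ph_g] by simp
  define SA where "SA j = (\<Sum>s<k. eps s * cc s v w * (2 * B (ph s (u j)) (u j)))" for j
  define SB where "SB j = (\<Sum>s<k. eps s * cc s (u j) w * (B (ph s v) (u j) + B (ph s (u j)) v))" for j
  define Ag where "Ag X j = (kos (u j) (X v w) (u j) / 2 - kos v (X (u j) w) (u j) / 2 - kos (br (u j) v) w (u j) / 2)"
    for X j
  define Aa where "Aa s = (kos (e s) (LC v w) (e s) / 2 - kos v (LC (e s) w) (e s) / 2 - kos (br (e s) v) w (e s) / 2)"
    for s
  have gpart: "eta j * Ag LC j = eta j * Ag lg j + eta j * (SB j - SA j) / 2" if j: "j < m" for j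
  proof -
    have uj: "u j \<in> g" using u_in[OF j] .
    have k1: "kos (u j) (LC v w) (u j) = kos (u j) (lg v w) (u j) - SA j"
      unfolding F1'[OF v w] kos_sub_sum SA_def
      by (simp add: kos_self[of "u j"] mult.assoc)
    have k2: "kos v (LC (u j) w) (u j) = kos v (lg (u j) w) (u j) - SB j"
      unfolding F1'[OF uj w] kos_sub_sum SB_def
      by (simp add: kos_e_mid[OF v uj] mult.assoc)
    show ?thesis unfolding Ag_def k1 k2 by (simp add: field_simps)
  qed
  have r1: "ricci br B UNIV v w = (\<Sum>j<m. eta j * Ag LC j) + (\<Sum>s<k. eps s * Aa s)"
    unfolding ricV Ag_def Aa_def ..
  have r2: "ricci br B g v w = (\<Sum>j<m. eta j * Ag lg j)"
    unfolding ricg Ag_def ..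
  have r3: "(\<Sum>j<m. eta j * Ag LC j) = ricci br B g v w + ((\<Sum>j<m. eta j * SB j) - (\<Sum>j<m. eta j * SA j)) / 2"
    unfolding r2 by (simp add: gpart sum.distrib sum_subtractf[symmetric] sum_divide_distrib right_diff_distrib)
  have SAsum: "(\<Sum>j<m. eta j * SA j) = (\<Sum>s<k. eps s * cc s v w * 2 * T s)"
    unfolding SA_def sum_swap_lemma T by (simp add: sum_distrib_left mult_ac)
  have SBs: "(\<Sum>j<m. eta j * (cc s (u j) w * (B (ph s v) (u j) + B (ph s (u j)) v)))
      = B (ph s v + P s v) (ph s w + P s w) / 2" for s
  proof -
    have "B (ph s v + P s v) (ph s w + P s w) = (\<Sum>j<m. eta j * B (ph s v + P s v) (u j) * B (u j) (ph s w + P s w))"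
      by (rule parg) (simp add: v ph_g P_in real_vector.subspace_add[OF g_sub])
    also have "\<dots> = (\<Sum>j<m. eta j * (cc s (u j) w * (B (ph s v) (u j) + B (ph s (u j)) v)) * 2)"
    proof (rule sum.cong[OF refl])
      fix j assume "j \<in> {..<m}"
      hence uj: "u j \<in> g" using u_in by simp
      have a1: "B (P s v) (u j) = B (ph s (u j)) v" using P_B[OF uj] sym by metis
      have a2: "B (u j) (P s w) = B (ph s (u j)) w" using P_B[OF uj] sym by metis
      have a3: "B (u j) (ph s w) = B (ph s w) (u j)" by (rule sym)
      show "eta j * B (ph s v + P s v) (u j) * B (u j) (ph s w + P s w) =
          eta j * (cc s (u j) w * (B (ph s v) (u j) + B (ph s (u j)) v)) * 2"
        unfolding cc_def using a1 a2 a3 by (simp add: algebra_simps)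
    qed
    finally show ?thesis by (simp add: sum_distrib_right[symmetric])
  qed
  have SBsum: "(\<Sum>j<m. eta j * SB j) = (\<Sum>s<k. eps s * (B (ph s v + P s v) (ph s w + P s w) / 2))"
    unfolding SB_def sum_swap_lemma
  proof (rule sum.cong[OF refl])
    fix s
    have "(\<Sum>j<m. eta j * (eps s * cc s (u j) w * (B (ph s v) (u j) + B (ph s (u j)) v)))
       = eps s * (\<Sum>j<m. eta j * (cc s (u j) w * (B (ph s v) (u j) + B (ph s (u j)) v)))"
      by (simp add: sum_distrib_left mult_ac)
    thus "(\<Sum>j<m. eta j * (eps s * cc s (u j) w * (B (ph s v) (u j) + B (ph s (u j)) v)))
       = eps s * (B (ph s v + P s v) (ph s w + P s w) / 2)" by (simp only: SBs)
  qed
  have Aas: "Aa s = (B (P s v) (P s w) / 2 - B (P s v) (ph s w) / 2 + B (ph s v) (P s w) / 2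
       - B (ph s v) (ph s w) / 2 - B (ph s w) (ph s v) - B (ph s (ph s v)) w) / 2" if s: "s < k" for s
  proof -
    define y where "y = (1/2) *\<^sub>R (P s w - ph s w)"
    have y: "y \<in> g" unfolding y_def
      by (intro real_vector.subspace_scale[OF g_sub] real_vector.subspace_diff[OF g_sub] P_in ph_g w)
    have b1: "kos (e s) (LC v w) (e s) = 0" by (rule kos_self_e[OF s])
    have b2: "kos v (LC (e s) w) (e s) = - B (ph s y) v - B (ph s v) y"
      unfolding F3[OF w s] y_def[symmetric] by (rule kos_gge[OF v y s])
    have b3: "kos (br (e s) v) w (e s) = B (ph s w) (ph s v) + B (ph s (ph s v)) w"
      using br_anti[of "e s" v] kos_neg1 kos_gge[OF ph_g[OF v] w s] by simp
    have b4: "B (ph s y) v = B (P s v) y" using P_B[OF y] sym by metis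
    show ?thesis unfolding Aa_def b1 b2 b3 b4 by (simp add: y_def field_simps)
  qed
  have final: "eps s * (B (ph s v + P s v) (ph s w + P s w) / 2) / 2 - eps s * cc s v w * 2 * T s / 2 + eps s * Aa s
     = 1/2 * eps s * B (ph s (P s v) - P s (ph s v)) w - 1/2 * eps s * B (ph s v + P s v) w * T s"
    if s: "s < k" for s
  proof -
    have c1: "B v (ph s w) = B (P s v) w" using P_B[OF w] by simp
    have c2: "B (ph s (P s v)) w = B (P s w) (P s v)" using P_B[OF P_in, of s w] sym by metis
    have c3: "B (P s (ph s v)) w = B (ph s v) (ph s w)" using P_B[OF w] by simp
    have c4: "B (ph s (ph s v)) w = B (P s w) (ph s v)" using P_B[OF ph_g[OF v], of s w] sym by metis
    have c5: "B (ph s w) (ph s v) = B (ph s v) (ph s w)" by (rule sym)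
    have c6: "B (P s w) (ph s v) = B (ph s v) (P s w)" by (rule sym)
    have c7: "B (P s w) (P s v) = B (P s v) (P s w)" by (rule sym)
    have c8: "B (ph s w) (P s v) = B (P s v) (ph s w)" by (rule sym)
    show ?thesis unfolding Aas[OF s] cc_def B_diff1 B_add1 B_add2 c1 c2 c3 c4 c5 c6 c7 c8
      by (simp add: field_simps)
  qed
  have "ricci br B UNIV v w = ricci br B g v w +
      ((\<Sum>s<k. eps s * (B (ph s v + P s v) (ph s w + P s w) / 2)) - (\<Sum>s<k. eps s * cc s v w * 2 * T s)) / 2
      + (\<Sum>s<k. eps s * Aa s)"
    unfolding r1 r3 SAsum SBsum ..
  also have "\<dots> = ricci br B g v w + (\<Sum>s<k. eps s * (B (ph s v + P s v) (ph s w + P s w) / 2) / 2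
        - eps s * cc s v w * 2 * T s / 2 + eps s * Aa s)"
    by (simp add: sum.distrib sum_subtractf sum_divide_distrib diff_divide_distrib)
  also have "\<dots> = ricci br B g v w + (\<Sum>s<k. 1/2 * eps s * B (ph s (P s v) - P s (ph s v)) w
               - 1/2 * eps s * B (ph s v + P s v) w * T s)"
  proof -
    have "(\<Sum>s<k. eps s * (B (ph s v + P s v) (ph s w + P s w) / 2) / 2
        - eps s * cc s v w * 2 * T s / 2 + eps s * Aa s) = (\<Sum>s<k. 1/2 * eps s * B (ph s (P s v) - P s (ph s v)) w
               - 1/2 * eps s * B (ph s v + P s v) w * T s)"
    proof (rule sum.cong[OF refl])
      fix s assume "s \<in> {..<k}" thus "eps s * (B (ph s v + P s v) (ph s w + P s w) / 2) / 2
        - eps s * cc s v w * 2 * T s / 2 + eps s * Aa s = 1/2 * eps s * B (ph s (P s v) - P s (ph s v)) w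
               - 1/2 * eps s * B (ph s v + P s v) w * T s" by (intro final) simp
    qed
    thus ?thesis by simp
  qed
  finally show ?thesis unfolding T_def .
qed


abbreviation "LCS j \<equiv> lower_central br g j"

lemma LCS_sub: "subspace (LCS j)"
  by (cases j) (simp_all add: g_sub bracket_span_def real_vector.subspace_span)

lemma LCS_dec: "LCS (Suc j) \<subseteq> LCS j"
proof (induction j)
  case 0
  show ?case unfolding lower_central.simps bracket_span_def
    by (rule real_vector.span_minimal) (auto simp: ideal1 g_sub)
next
  case (Suc j)
  show ?case unfolding lower_central.simps bracket_span_def
    using Suc.IH by (intro real_vector.span_mono) (auto simp: bracket_span_def)
qed

lemma LCS_g: "x \<in> LCS j \<Longrightarrow> x \<in> g"
proof (induction j)
  case 0 thus ?case by simp
next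
  case (Suc j) thus ?case using LCS_dec by blast
qed

lemma ad_low: "z \<in> g \<Longrightarrow> x \<in> LCS j \<Longrightarrow> br z x \<in> LCS (Suc j)"
  by (auto simp: bracket_span_def intro!: real_vector.span_base)

lemma jac2: "br (br x y) z = br x (br y z) + br (br x z) y"
proof -
  have "br x (br y z) + br y (br z x) + br z (br x y) = 0" by (rule jac)
  moreover have "br y (br z x) = br (br x z) y"
    using br_anti[of y "br z x"] br_anti[of z x] by simp
  moreover have "br z (br x y) = - br (br x y) z" by (rule br_anti)
  ultimately show ?thesis by (simp add: algebra_simps eq_neg_iff_add_eq_0)
qed

lemma ph_pres: "x \<in> LCS j \<Longrightarrow> ph s x \<in> LCS j"
proof (induction j arbitrary: x)
  case 0 thus ?case using ideal1 by simp
next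
  case (Suc j)
  have sub: "subspace ((ph s) -` LCS (Suc j))"
    by (rule real_vector.linear_subspace_vimage[OF ph_lin LCS_sub])
  have "x \<in> span {br a b | a b. a \<in> g \<and> b \<in> LCS j}"
    using Suc.prems by (simp add: bracket_span_def)
  hence "x \<in> (ph s) -` LCS (Suc j)"
  proof (rule real_vector.span_induct[where P="\<lambda>x. x \<in> (ph s) -` LCS (Suc j)"])
    show "subspace {x. x \<in> (ph s) -` LCS (Suc j)}" using sub by (simp add: vimage_def)
  next
    fix y assume "y \<in> {br a b | a b. a \<in> g \<and> b \<in> LCS j}"
    then obtain a b where ab: "a \<in> g" "b \<in> LCS j" "y = br a b" by blast
    have "ph s y = br a (ph s b) + br (ph s a) b" unfolding ab(3) by (rule jac2)
    moreover have "br a (ph s b) \<in> LCS (Suc j)" using ad_low[OF ab(1) Suc.IH[OF ab(2)]] .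
    moreover have "br (ph s a) b \<in> LCS (Suc j)" using ad_low[OF ph_g[OF ab(1)] ab(2)] .
    ultimately show "y \<in> (ph s) -` LCS (Suc j)"
      using real_vector.subspace_add[OF LCS_sub[of "Suc j"]] by simp
  qed
  thus ?case by simp
qed

lemma nil_tr:
  assumes nil: "nilpotent_sub br g" and f: "linear f"
    and low: "\<And>j x. x \<in> LCS j \<Longrightarrow> f x \<in> LCS (Suc j)"
  shows "(\<Sum>j<m. eta j * B (f (u j)) (u j)) = 0"
proof -
  obtain n where n: "LCS n = {0}" using nil by (auto simp: nilpotent_sub_def)
  obtain Bs where Bs: "independent Bs" "span Bs = LCS 0" "(\<Sum>b\<in>Bs. representation Bs (f b) b) = 0"
    using filt_trace_zero[of LCS, OF LCS_sub LCS_dec n f low] by blast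
  have fS: "f x \<in> span (u ` {..<m})" if "x \<in> span (u ` {..<m})" for x
    using low[of x 0] that LCS_dec[of 0] g_span by auto
  have "(\<Sum>b\<in>Bs. representation Bs (f b) b) = (\<Sum>i\<in>{..<m}. eta i * B (f (u i)) (u i))"
    using trace_basis[OF onf_g f fS Bs(1)] Bs(2) g_span by simp
  thus ?thesis using Bs(3) by simp
qed

lemma formula3:
  assumes s: "s < k" and r: "r < k"
  shows "ricci br B UNIV (e s) (e r) =
        - 1/2 * endo_inner B m u eta (ph s) (ph r) - 1/2 * trace_on g (ph s \<circ> ph r)"
proof -
  have apart: "(\<Sum>t<k. eps t * (kos (e t) (LC (e s) (e r)) (e t) / 2 - kos (e s) (LC (e t) (e r)) (e t) / 2
      - kos (br (e t) (e s)) (e r) (e t) / 2)) = 0"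
    by (rule sum.neutral) (simp add: F4 r s ab e_in)
  define y where "y j = (1/2) *\<^sub>R (ph r (u j) + P r (u j))" for j
  have gsum: "eta j * (kos (u j) (LC (e s) (e r)) (u j) / 2 - kos (e s) (LC (u j) (e r)) (u j) / 2
      - kos (br (u j) (e s)) (e r) (u j) / 2) =
      eta j * B (ph s (ph r (u j))) (u j) / 4 + eta j * B (ph s (P r (u j))) (u j) / 4
      - 3 * (eta j * B (ph s (u j)) (ph r (u j))) / 4 - 3 * (eta j * B (ph r (ph s (u j))) (u j)) / 4"
    if j: "j < m" for j
  proof -
    have uj: "u j \<in> g" using u_in[OF j] .
    have y: "y j \<in> g" unfolding y_def
      by (intro real_vector.subspace_scale[OF g_sub] real_vector.subspace_add[OF g_sub] P_in ph_g uj)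
    have b1: "kos (e s) (LC (u j) (e r)) (u j) = - B (ph s (y j)) (u j) + B (ph s (u j)) (y j)"
      unfolding F2[OF uj r] y_def[symmetric] by (rule kos_egg[OF y uj s])
    have b2: "kos (br (u j) (e s)) (e r) (u j) = B (ph r (ph s (u j))) (u j) + B (ph r (u j)) (ph s (u j))"
      by (rule kos_geg[OF ph_g[OF uj] uj r])
    have b3: "B (ph s (u j)) (P r (u j)) = B (ph r (ph s (u j))) (u j)"
      using P_B[OF ph_g[OF uj], of r "u j"] sym by metis
    have b4: "B (ph r (u j)) (ph s (u j)) = B (ph s (u j)) (ph r (u j))" by (rule sym)
    show ?thesis unfolding F4[OF s r] b1 b2 y_def
      by (simp add: b3 b4 field_simps)
  qed
  define t1 where "t1 = (\<Sum>j<m. eta j * B (ph s (ph r (u j))) (u j))"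
  define t2 where "t2 = (\<Sum>j<m. eta j * B (ph r (ph s (u j))) (u j))"
  define X where "X = (\<Sum>j<m. eta j * B (ph s (P r (u j))) (u j))"
  define ip where "ip = (\<Sum>j<m. eta j * B (ph s (u j)) (ph r (u j)))"
  have t12: "t1 = t2" unfolding t1_def t2_def
    using tr_comm[OF onf_g g_span ph_lin ph_lin ph_g ph_g] by simp
  have Xip: "X = ip"
  proof -
    have "X = (\<Sum>j<m. eta j * B (P r (ph s (u j))) (u j))" unfolding X_def
      using tr_comm[OF onf_g g_span ph_lin P_lin ph_g] P_in by simp
    also have "\<dots> = ip" unfolding ip_def
      by (rule sum.cong[OF refl]) (simp add: P_B u_in)
    finally show ?thesis .
  qed
  have tr: "trace_on g (ph s \<circ> ph r) = t1" unfolding t1_def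
    using trg[of "ph s \<circ> ph r"] ph_lin ph_g by (simp add: linear_compose)
  have ei: "endo_inner B m u eta (ph s) (ph r) = ip" unfolding ip_def endo_inner_def ..
  have "ricci br B UNIV (e s) (e r) = (\<Sum>j<m. eta j * B (ph s (ph r (u j))) (u j) / 4 + eta j * B (ph s (P r (u j))) (u j) / 4
      - 3 * (eta j * B (ph s (u j)) (ph r (u j))) / 4 - 3 * (eta j * B (ph r (ph s (u j))) (u j)) / 4)"
    unfolding ricV apart by (simp add: gsum)
  also have "\<dots> = t1 / 4 + X / 4 - 3 * ip / 4 - 3 * t2 / 4"
    unfolding t1_def X_def ip_def t2_def
    by (simp add: sum.distrib sum_subtractf sum_divide_distrib sum_distrib_left)
  finally show ?thesis unfolding tr ei using t12 Xip by simp
qed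


lemma br_expand: "x \<in> g \<Longrightarrow> B (br x y) v = (\<Sum>i<m. eta i * B x (u i) * B (br (u i) y) v)"
proof -
  assume x: "x \<in> g"
  have "x = (\<Sum>i<m. (eta i * B x (u i)) *\<^sub>R u i)" using expand[OF onf_g] x g_span by simp
  hence "B (br x y) v = B (br (\<Sum>i<m. (eta i * B x (u i)) *\<^sub>R u i) y) v" by simp
  also have "\<dots> = (\<Sum>i<m. eta i * B x (u i) * B (br (u i) y) v)"
    by (simp add: br_sum1 B_sum1)
  finally show ?thesis .
qed

lemma A3: "(\<Sum>j<m. eta j * B (br (ph r (u j)) (u j)) v) + (\<Sum>j<m. eta j * B (br (P r (u j)) (u j)) v) = 0"
proof -
  have E1: "(\<Sum>j<m. eta j * B (br (ph r (u j)) (u j)) v) =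
      (\<Sum>j<m. \<Sum>i<m. eta j * (eta i * B (ph r (u j)) (u i) * B (br (u i) (u j)) v))"
    by (rule sum.cong[OF refl]) (simp add: br_expand ph_g u_in sum_distrib_left)
  have "(\<Sum>j<m. eta j * B (br (P r (u j)) (u j)) v) =
      (\<Sum>j<m. \<Sum>i<m. eta j * (eta i * B (P r (u j)) (u i) * B (br (u i) (u j)) v))"
    by (rule sum.cong[OF refl]) (simp add: br_expand P_in sum_distrib_left)
  also have "\<dots> = (\<Sum>j<m. \<Sum>i<m. eta j * (eta i * B (ph r (u i)) (u j) * B (br (u i) (u j)) v))"
    by (intro sum.cong refl) (simp add: P_B u_in sym[of "u _" "ph r (u _)"])
  also have "\<dots> = (\<Sum>i<m. \<Sum>j<m. eta j * (eta i * B (ph r (u i)) (u j) * B (br (u i) (u j)) v))"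
    by (rule sum.swap)
  also have "\<dots> = (\<Sum>i<m. \<Sum>j<m. - (eta i * (eta j * B (ph r (u i)) (u j) * B (br (u j) (u i)) v)))"
    by (intro sum.cong refl) (subst br_anti, simp)
  also have "\<dots> = - (\<Sum>i<m. \<Sum>j<m. eta i * (eta j * B (ph r (u i)) (u j) * B (br (u j) (u i)) v))"
    by (simp add: sum_negf)
  finally show ?thesis using E1 by simp
qed

lemma kos_gee: "x \<in> g \<Longrightarrow> r < k \<Longrightarrow> s < k \<Longrightarrow> kos x (e r) (e s) = 0"
  unfolding kos_def using Bga[OF ph_g e_in] ab[OF e_in e_in] Bga[OF bre_g1 e_in] by simp

lemma formula2:
  assumes nil: "nilpotent_sub br g" and v: "v \<in> g" and r: "r < k"
  shows "ricci br B UNIV v (e r) = 1/2 * endo_inner B m u eta (br v) (ph r)"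
proof -
  have apart: "(\<Sum>s<k. eps s * (kos (e s) (LC v (e r)) (e s) / 2 - kos v (LC (e s) (e r)) (e s) / 2
      - kos (br (e s) v) (e r) (e s) / 2)) = 0"
  proof (rule sum.neutral, rule ballI)
    fix s assume "s \<in> {..<k}" hence s: "s < k" by simp
    have "kos (br (e s) v) (e r) (e s) = 0"
      using br_anti[of "e s" v] kos_neg1 kos_gee[OF ph_g[OF v] r s] by simp
    thus "eps s * (kos (e s) (LC v (e r)) (e s) / 2 - kos v (LC (e s) (e r)) (e s) / 2
      - kos (br (e s) v) (e r) (e s) / 2) = 0"
      by (simp add: kos_self_e[OF s] F4[OF s r])
  qed
  define z where "z = (1/2) *\<^sub>R (ph r v + P r v)"
  have z: "z \<in> g" unfolding z_def
    by (intro real_vector.subspace_scale[OF g_sub] real_vector.subspace_add[OF g_sub] P_in ph_g v)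
  have gsum: "eta j * (kos (u j) (LC v (e r)) (u j) / 2 - kos v (LC (u j) (e r)) (u j) / 2
      - kos (br (u j) v) (e r) (u j) / 2) =
      - (eta j * B (br z (u j)) (u j)) - eta j * B (br v (ph r (u j))) (u j) / 4
      - eta j * B (br v (P r (u j))) (u j) / 4
      + eta j * B (br (ph r (u j)) (u j)) v / 4 + eta j * B (br (P r (u j)) (u j)) v / 4
      + 3 * (eta j * B (ph r (br v (u j))) (u j)) / 4 + 3 * (eta j * B (br v (u j)) (ph r (u j))) / 4"
    if j: "j < m" for j
  proof -
    have uj: "u j \<in> g" using u_in[OF j] .
    have b1: "kos (u j) (LC v (e r)) (u j) = - 2 * B (br z (u j)) (u j)"
    proof -
      have "kos (u j) (LC v (e r)) (u j) = 2 * B (br (u j) z) (u j)"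
        unfolding F2[OF v r] z_def[symmetric] by (rule kos_self)
      moreover have "br (u j) z = - br z (u j)" by (rule br_anti)
      ultimately show ?thesis by simp
    qed
    have b2: "kos v (LC (u j) (e r)) (u j) =
        B (br v (ph r (u j))) (u j) / 2 + B (br v (P r (u j))) (u j) / 2
        - B (br (ph r (u j)) (u j)) v / 2 - B (br (P r (u j)) (u j)) v / 2
        - B (br v (u j)) (ph r (u j)) / 2 - B (ph r (br v (u j))) (u j) / 2"
    proof -
      define y where "y = (1/2) *\<^sub>R (ph r (u j) + P r (u j))"
      have yy: "LC (u j) (e r) = y" unfolding y_def by (rule F2[OF uj r])
      have d0: "kos v y (u j) = B (br v y) (u j) - B (br y (u j)) v + B (br (u j) v) y"
        by (simp add: kos_def)
      have d1: "B (br v y) (u j) = B (br v (ph r (u j))) (u j) / 2 + B (br v (P r (u j))) (u j) / 2"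
        by (simp add: y_def)
      have d2: "B (br y (u j)) v = B (br (ph r (u j)) (u j)) v / 2 + B (br (P r (u j)) (u j)) v / 2"
        by (simp add: y_def)
      have e1: "B (P r (u j)) (br v (u j)) = B (u j) (ph r (br v (u j)))"
        by (rule P_B[OF ideal1[OF v]])
      have e2: "B (br v (u j)) (P r (u j)) = B (ph r (br v (u j))) (u j)"
        using e1 sym[of "br v (u j)" "P r (u j)"] sym[of "u j" "ph r (br v (u j))"] by simp
      have d3: "B (br (u j) v) y = - B (br v (u j)) (ph r (u j)) / 2 - B (ph r (br v (u j))) (u j) / 2"
      proof -
        have "br (u j) v = - br v (u j)" by (rule br_anti)
        hence "B (br (u j) v) y = - B (br v (u j)) y" by simp
        also have "\<dots> = - B (br v (u j)) (ph r (u j)) / 2 - B (br v (u j)) (P r (u j)) / 2"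
          by (simp add: y_def field_simps)
        finally show ?thesis using e2 by simp
      qed
      show ?thesis unfolding yy d0 d1 d2 d3 by simp
    qed
    have b3: "kos (br (u j) v) (e r) (u j) = - B (ph r (br v (u j))) (u j) - B (br v (u j)) (ph r (u j))"
      using kos_geg[OF ideal1[OF uj] uj r, of v] br_anti[of "u j" v] sym[of "ph r (u j)" "br v (u j)"]
      by simp
    show ?thesis unfolding b1 b2 b3 by (simp add: field_simps)
  qed
  have S1: "(\<Sum>j<m. eta j * B (br z (u j)) (u j)) = 0"
    by (rule nil_tr[OF nil br_lin2]) (rule ad_low[OF z])
  have S2: "(\<Sum>j<m. eta j * B (br v (ph r (u j))) (u j)) = 0"
    using nil_tr[OF nil, of "br v \<circ> ph r"] linear_compose[OF ph_lin br_lin2] ad_low[OF v] ph_pres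
    by simp
  have S6: "(\<Sum>j<m. eta j * B (ph r (br v (u j))) (u j)) = 0"
  proof -
    have L: "linear (\<lambda>x. ph r (br v x))" using linear_compose[OF br_lin2 ph_lin] by (simp add: o_def)
    show ?thesis by (rule nil_tr[OF nil L]) (intro ph_pres ad_low[OF v])
  qed
  have S3: "(\<Sum>j<m. eta j * B (br v (P r (u j))) (u j)) = (\<Sum>j<m. eta j * B (br v (u j)) (ph r (u j)))"
  proof -
    have "(\<Sum>j<m. eta j * B (br v (P r (u j))) (u j)) = (\<Sum>j<m. eta j * B (P r (br v (u j))) (u j))"
      using tr_comm[OF onf_g g_span br_lin2 P_lin ideal1[OF v]] P_in by simp
    also have "\<dots> = (\<Sum>j<m. eta j * B (br v (u j)) (ph r (u j)))"
      by (rule sum.cong[OF refl]) (simp add: P_B u_in)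
    finally show ?thesis .
  qed
  have "ricci br B UNIV v (e r) = (\<Sum>j<m. - (eta j * B (br z (u j)) (u j)) - eta j * B (br v (ph r (u j))) (u j) / 4
      - eta j * B (br v (P r (u j))) (u j) / 4
      + eta j * B (br (ph r (u j)) (u j)) v / 4 + eta j * B (br (P r (u j)) (u j)) v / 4
      + 3 * (eta j * B (ph r (br v (u j))) (u j)) / 4 + 3 * (eta j * B (br v (u j)) (ph r (u j))) / 4)"
    unfolding ricV apart by (simp add: gsum)
  also have "\<dots> = - (\<Sum>j<m. eta j * B (br z (u j)) (u j)) - (\<Sum>j<m. eta j * B (br v (ph r (u j))) (u j)) / 4
      - (\<Sum>j<m. eta j * B (br v (P r (u j))) (u j)) / 4
      + ((\<Sum>j<m. eta j * B (br (ph r (u j)) (u j)) v) + (\<Sum>j<m. eta j * B (br (P r (u j)) (u j)) v)) / 4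
      + 3 * (\<Sum>j<m. eta j * B (ph r (br v (u j))) (u j)) / 4 + 3 * (\<Sum>j<m. eta j * B (br v (u j)) (ph r (u j))) / 4"
    by (simp add: sum.distrib sum_subtractf sum_divide_distrib sum_distrib_left sum_negf add_divide_distrib)
  also have "\<dots> = 1/2 * (\<Sum>j<m. eta j * B (br v (u j)) (ph r (u j)))"
    unfolding S1 S2 S3 S6 A3 by simp
  finally show ?thesis unfolding endo_inner_def .
qed
end


theorem proposition1p10:
  fixes br :: "'a::euclidean_space \<Rightarrow> 'a \<Rightarrow> 'a" and B :: "'a \<Rightarrow> 'a \<Rightarrow> real"
    and g a :: "'a set" and k m :: nat and e u :: "nat \<Rightarrow> 'a" and eps eta :: "nat \<Rightarrow> real"
  assumes lie: "lie_algebra br" and solv: "solvable br" and met: "metric B"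
    and dec: "standard_decomposition br B g a"
    and onb_a: "orthonormal_basis B a k e eps"
    and onb_g: "orthonormal_basis B g m u eta"
  defines "\<phi> \<equiv> (\<lambda>s v. br v (e s))"
  shows
    "(\<forall>v\<in>g. \<forall>w\<in>g. ricci br B UNIV v w = ricci br B g v w +
        (\<Sum>s<k. 1/2 * eps s * B ((\<phi> s) (adjoint_on B g (\<phi> s) v) - adjoint_on B g (\<phi> s) ((\<phi> s) v)) w
               - 1/2 * eps s * B ((\<phi> s) v + adjoint_on B g (\<phi> s) v) w * trace_on g (\<phi> s))) \<and>
     (\<forall>v\<in>g. \<forall>s<k. ricci br B UNIV v (e s) = 1/2 * endo_inner B m u eta (br v) (\<phi> s)) \<and>
     (\<forall>s<k. \<forall>r<k. ricci br B UNIV (e s) (e r) =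
        - 1/2 * endo_inner B m u eta (\<phi> s) (\<phi> r) - 1/2 * trace_on g (\<phi> s \<circ> \<phi> r))"
proof -
  have lb: "bilinear br" "\<And>x. br x x = 0" "\<And>x y z. br x (br y z) + br y (br z x) + br z (br x y) = 0"
    using lie by (auto simp: lie_algebra_def)
  have mb: "bilinear B" "\<And>x y. B x y = B y x"
    using met by (auto simp: metric_def)
  have nil: "nilpotent_sub br g" using dec by (simp add: standard_decomposition_def)
  interpret S: setting B br g a k m e u eps eta
    by unfold_locales (simp_all add: lb mb dec onb_a onb_g)
  show ?thesis
    unfolding \<phi>_def
    using S.formula1 S.formula2[OF nil] S.formula3 by simp
qed

end
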